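(* Let $K=2^m$ with $m\in\mathbb{N}$, and let $c\in\mathbb{R}^{K-1}$ be the vector with $c_i=1$ for odd $i$ and $c_i=0$ for even $i$. Suppose $a\in\mathbb{R}^{K-1}$ is written as $a=\mu c+\mu\epsilon$ with $\mu=\frac2K\|a\|_1\in\mathbb{R}$ and $\epsilon\in\mathbb{R}^{K-1}$ satisfying $\sum_i\epsilon_i=0$. Then $$\Psi e^{-\Psi a}=Ke^{-\frac{K\mu}{2}}1_{K-1}-Ke^{-\frac{K\mu}{2}}\mu\,\epsilon+2\big(e^{-K\mu}-e^{-\frac{K\mu}{2}}\big)\big(1-\mu(\Psi\epsilon)_1\big)c+O(\|\epsilon\|_1^2),$$ where the exponential is taken entrywise.
   Context: Sylvester Hadamard matrices: $\Phi_1=(1)$, $\Phi_{2^m}=\begin{bmatrix}\Phi_{2^{m-1}}&\Phi_{2^{m-1}}\\ \Phi_{2^{m-1}}&-\Phi_{2^{m-1}}\end{bmatrix}$, $\Phi=\Phi_K$. $\Psi\in\mathbb{R}^{(K-1)\times(K-1)}$ is obtained from $1_K1_K^T-\Phi$ by deleting its first row and first column, indexed $1,\dots,K-1$. $\|\epsilon\|_1=\sum_i|\epsilon_i|$. *)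

theory Defs
  imports "HOL-Analysis.Analysis"
begin

(* Sylvester Hadamard matrix Phi_{2^m}, 0-based indices i,j < 2^m:
   sylv m i j = entry in row i+1, column j+1 of Phi_{2^m} (block recursion). *)
fun sylv :: "nat \<Rightarrow> nat \<Rightarrow> nat \<Rightarrow> real" where
  "sylv 0 i j = 1"
| "sylv (Suc m) i j =
     (let h = (2::nat) ^ m in
      if i < h \<and> j < h then sylv m i j
      else if i < h then sylv m i (j - h)
      else if j < h then sylv m (i - h) j
      else - sylv m (i - h) (j - h))"

(* Psi: 1 1^T - Phi with first row and column deleted, indexed 1..K-1 *)
definition Psi :: "nat \<Rightarrow> nat \<Rightarrow> nat \<Rightarrow> real" where
  "Psi m i j = 1 - sylv m i j"

(* vectors in R^{K-1} are functions nat => real, relevant on indices 1..K-1 *)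
definition matvec :: "nat \<Rightarrow> (nat \<Rightarrow> nat \<Rightarrow> real) \<Rightarrow> (nat \<Rightarrow> real) \<Rightarrow> nat \<Rightarrow> real" where
  "matvec m M v = (\<lambda>i. \<Sum>j = 1..2^m - 1. M i j * v j)"

definition l1norm :: "nat \<Rightarrow> (nat \<Rightarrow> real) \<Rightarrow> real" where
  "l1norm m v = (\<Sum>i = 1..2^m - 1. \<bar>v i\<bar>)"

definition cvec :: "nat \<Rightarrow> real" where
  "cvec i = (if odd i then 1 else 0)"

end

theory Submission
  imports Defs
begin

lemma exp_quad: fixes x :: real assumes "\<bar>x\<bar> \<le> 1" shows "\<bar>exp x - 1 - x\<bar> \<le> x\<^sup>2"
proof -
  have lo: "exp x - 1 - x \<ge> 0" using exp_ge_add_one_self[of x] by linarith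
  have "exp x \<le> 1 + x + x\<^sup>2"
  proof (cases "x \<ge> 0")
    case True then show ?thesis using exp_bound[of x] assms by simp
  next
    case False
    define y where "y = - x"
    have y: "0 \<le> y" "y \<le> 1" using False assms y_def by auto
    have "exp y \<ge> 1 + y" by (rule exp_ge_add_one_self)
    hence "exp (-y) \<le> 1 / (1+y)" using y by (simp add: exp_minus field_simps)
    also have "1/(1+y) \<le> 1 - y + y\<^sup>2" using y by (simp add: field_simps power2_eq_square)
    finally show ?thesis using y_def by simp
  qed
  thus ?thesis using lo by simp
qed

lemma sylv_0j[simp]: "sylv m 0 j = 1"
  by (induction m arbitrary: j) (auto simp: Let_def)

lemma sylv_i0[simp]: "sylv m i 0 = 1"
  by (induction m arbitrary: i) (auto simp: Let_def)

lemma sylv_sym: "sylv m i j = sylv m j i"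
  by (induction m arbitrary: i j) (auto simp: Let_def)

lemma sum_split_add: "(\<Sum>j<h+n. f j) = (\<Sum>j<h. f j) + (\<Sum>j<n. f (j+h::nat))"
  by (induction n) (auto simp: add.commute add.left_commute)

lemma sylv_orth: "i < 2^m \<Longrightarrow> k < 2^m \<Longrightarrow>
  (\<Sum>j<2^m. sylv m i j * sylv m j k) = (if i = k then 2^m else 0)"
proof (induction m arbitrary: i k)
  case 0 then show ?case by simp
next
  case (Suc m)
  define h :: nat where "h = 2^m"
  have hh: "(2::nat)^Suc m = h + h" by (simp add: h_def)
  have A: "(\<Sum>j<2^Suc m. sylv (Suc m) i j * sylv (Suc m) j k) =
     (\<Sum>j<h. sylv (Suc m) i j * sylv (Suc m) j k) + (\<Sum>j<h. sylv (Suc m) i (j+h) * sylv (Suc m) (j+h) k)"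
    unfolding hh by (rule sum_split_add)
  show ?case
  proof (cases "i < h")
    case i: True
    show ?thesis
    proof (cases "k < h")
      case True
      then show ?thesis using i A Suc.IH[of i k] by (simp add: h_def[symmetric] Let_def)
    next
      case False
      have "k - h < 2^m" using Suc.prems False by (simp add: h_def)
      then show ?thesis using False i A Suc.IH[of i "k-h"] Suc.prems
        by (simp add: h_def[symmetric] Let_def sum_negf)
    qed
  next
    case i: False
    have i': "i - h < 2^m" using Suc.prems i by (simp add: h_def)
    show ?thesis
    proof (cases "k < h")
      case True
      then show ?thesis using i i' A Suc.IH[of "i-h" k]
        by (simp add: h_def[symmetric] Let_def sum_negf)
    next
      case False
      have "k - h < 2^m" using Suc.prems False by (simp add: h_def)
      then show ?thesis using False i i' A Suc.IH[of "i-h" "k-h"] Suc.prems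
        by (auto simp: h_def[symmetric] Let_def sum_negf)
    qed
  qed
qed

lemma sylv_abs[simp]: "\<bar>sylv m i j\<bar> = 1"
  by (induction m arbitrary: i j) (auto simp: Let_def)

lemma sylv_1: "1 \<le> m \<Longrightarrow> j < 2^m \<Longrightarrow> sylv m j 1 = (if odd j then -1 else 1)"
proof (induction m arbitrary: j)
  case 0 then show ?case by simp
next
  case (Suc m)
  show ?case
  proof (cases "m = 0")
    case True
    then show ?thesis using Suc.prems by (cases j) (auto simp: Let_def)
  next
    case False
    have h2: "(2::nat) \<le> 2^m" using False
      by (metis One_nat_def Suc_leI neq0_conv power_increasing_iff power_one_right one_less_numeral_iff semiring_norm(76))
    have ev: "even ((2::nat)^m)" using False by simp
    show ?thesis
    proof (cases "j < 2^m")
      case True then show ?thesis using Suc.IH[of j] False h2 by (simp add: Let_def)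
    next
      case jn: False
      have "j - 2^m < 2^m" using Suc.prems jn by simp
      moreover have "odd (j - 2^m) = odd j" using ev jn by (simp add: even_diff_nat)
      ultimately show ?thesis using Suc.IH[of "j - 2^m"] False h2 jn by (simp add: Let_def)
    qed
  qed
qed

lemma sum_N: "(\<Sum>j=1..(2::nat)^m-1. f j) = (\<Sum>j<2^m. f j) - (f 0 :: real)"
proof -
  have "{..<(2::nat)^m} = insert 0 {1..2^m-1}" by auto
  thus ?thesis by simp
qed

lemma sylv_rowsum: "i < 2^m \<Longrightarrow> (\<Sum>j<2^m. sylv m i j) = (if i = 0 then 2^m else 0)"
  using sylv_orth[of i m 0] by simp

lemma sylv_colsum: "k < 2^m \<Longrightarrow> (\<Sum>j<2^m. sylv m j k) = (if k = 0 then 2^m else 0)"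
  using sylv_rowsum[of k m] by (simp add: sylv_sym)

lemma psi_row: "i \<in> {1..2^m-1} \<Longrightarrow> (\<Sum>j=1..2^m-1. Psi m i j) = 2^m"
proof -
  assume i: "i \<in> {1..2^m-1}"
  hence "i < 2^m" "i \<noteq> 0" by auto
  hence "(\<Sum>j<2^m. Psi m i j) = 2^m" using sylv_rowsum[of i m]
    by (simp add: Psi_def sum_subtractf)
  moreover have "(\<Sum>j=1..2^m-1. Psi m i j) = (\<Sum>j<2^m. Psi m i j) - Psi m i 0" by (rule sum_N)
  ultimately show ?thesis by (simp add: Psi_def)
qed

lemma psi_sq: "i \<in> {1..2^m-1} \<Longrightarrow> k \<in> {1..2^m-1} \<Longrightarrow>
   (\<Sum>j=1..2^m-1. Psi m i j * Psi m j k) = 2^m + (if i = k then 2^m else 0)"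
proof -
  assume i: "i \<in> {1..2^m-1}" and k: "k \<in> {1..2^m-1}"
  hence ik: "i < 2^m" "i \<noteq> 0" "k < 2^m" "k \<noteq> 0" by auto
  have e: "Psi m i j * Psi m j k = 1 - sylv m i j - sylv m j k + sylv m i j * sylv m j k" for j
    by (simp add: Psi_def algebra_simps)
  have "(\<Sum>j<2^m. Psi m i j * Psi m j k) = 2^m + (if i = k then 2^m else 0)"
    unfolding e using ik sylv_rowsum[of i m] sylv_colsum[of k m] sylv_orth[of i m k]
    by (simp add: sum.distrib sum_subtractf)
  moreover have "(\<Sum>j=1..2^m-1. Psi m i j * Psi m j k) = (\<Sum>j<2^m. Psi m i j * Psi m j k) - Psi m i 0 * Psi m 0 k" by (rule sum_N)
  ultimately show ?thesis by (simp add: Psi_def)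
qed

lemma psi_1: "1 \<le> m \<Longrightarrow> j < 2^m \<Longrightarrow> Psi m j 1 = 2 * cvec j"
  using sylv_1[of m j] by (simp add: Psi_def cvec_def)

lemma psi_psi_vec: assumes "i \<in> {1..2^m-1}" "(\<Sum>l=1..2^m-1. e l) = 0"
  shows "(\<Sum>j=1..2^m-1. Psi m i j * (\<Sum>l=1..2^m-1. Psi m j l * e l)) = 2^m * e i"
proof -
  have "(\<Sum>j=1..2^m-1. Psi m i j * (\<Sum>l=1..2^m-1. Psi m j l * e l))
     = (\<Sum>l=1..2^m-1. (\<Sum>j=1..2^m-1. Psi m i j * Psi m j l) * e l)"
    unfolding sum_distrib_left sum_distrib_right mult.assoc by (rule sum.swap)
  also have "\<dots> = (\<Sum>l=1..2^m-1. 2^m * e l + (if l = i then 2^m * e i else 0))"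
  proof (rule sum.cong[OF refl])
    fix l assume "l \<in> {1..(2::nat)^m-1}"
    from psi_sq[OF assms(1) this] show "(\<Sum>j=1..2^m-1. Psi m i j * Psi m j l) * e l = 2^m * e l + (if l = i then 2^m * e i else 0)"
      by (simp add: distrib_right)
  qed
  also have "\<dots> = 2^m * e i" using assms
    by (simp add: sum.distrib sum_distrib_left[symmetric])
  finally show ?thesis .
qed

lemma weighted: fixes S :: "nat set" and P v :: "nat \<Rightarrow> real" and E D :: real assumes "1 \<in> S" "finite S"
  shows "(\<Sum>j\<in>S. P j * (E + (if j = 1 then D else 0)) * v j) = E * (\<Sum>j\<in>S. P j * v j) + D * P 1 * v 1"
proof -
  have "(\<Sum>j\<in>S. P j * (E + (if j = 1 then D else 0)) * v j) = (\<Sum>j\<in>S. E * (P j * v j) + (if j = 1 then D * P j * v j else 0))"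
    by (intro sum.cong) (auto simp: distrib_left distrib_right mult_ac)
  also have "\<dots> = E * (\<Sum>j\<in>S. P j * v j) + D * P 1 * v 1"
    using assms by (simp add: sum.distrib sum_distrib_left)
  finally show ?thesis .
qed

lemma psi_abs: "\<bar>Psi m i j\<bar> \<le> 2"
proof -
  have "\<bar>sylv m i j\<bar> = 1" by simp
  thus ?thesis unfolding Psi_def by linarith
qed

theorem lemmaD9:
  fixes m :: nat and \<mu> :: real
  shows "\<exists>C \<delta>. \<delta> > 0 \<and>
    (\<forall>(a::nat \<Rightarrow> real) (\<epsilon>::nat \<Rightarrow> real).
       (\<forall>i\<in>{1..2^m - 1}. a i = \<mu> * cvec i + \<mu> * \<epsilon> i) \<and>
       \<mu> = 2 / real (2^m) * l1norm m a \<and>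
       (\<Sum>i = 1..2^m - 1. \<epsilon> i) = 0 \<and>
       l1norm m \<epsilon> < \<delta> \<longrightarrow>
       (\<forall>i\<in>{1..2^m - 1}.
          \<bar>matvec m (Psi m) (\<lambda>j. exp (- matvec m (Psi m) a j)) i
           - ( real (2^m) * exp (- real (2^m) * \<mu> / 2)
               - real (2^m) * exp (- real (2^m) * \<mu> / 2) * \<mu> * \<epsilon> i
               + 2 * (exp (- real (2^m) * \<mu>) - exp (- real (2^m) * \<mu> / 2))
                   * (1 - \<mu> * matvec m (Psi m) \<epsilon> 1) * cvec i)\<bar>
          \<le> C * (l1norm m \<epsilon>)\<^sup>2))"
proof -
  define N where "N = {1..(2::nat)^m - 1}"
  define K :: real where "K = real (2^m)"
  define W where "W = exp (K * \<bar>\<mu>\<bar>)"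
  define \<delta> :: real where "\<delta> = 1 / (2 * \<bar>\<mu>\<bar> + 1)"
  define C where "C = 8 * K * W * \<mu>\<^sup>2"
  define E1 where "E1 = exp (- real (2^m) * \<mu>)"
  define E2 where "E2 = exp (- real (2^m) * \<mu> / 2)"
  have Kpos: "K > 0" by (simp add: K_def)
  have dpos: "\<delta> > 0" by (simp add: \<delta>_def add_pos_nonneg)
  have main: "\<bar>matvec m (Psi m) (\<lambda>j. exp (- matvec m (Psi m) a j)) i
           - ( K * E2 - K * E2 * \<mu> * \<epsilon> i + 2 * (E1 - E2) * (1 - \<mu> * matvec m (Psi m) \<epsilon> 1) * cvec i)\<bar>
          \<le> C * (l1norm m \<epsilon>)\<^sup>2"
    if Ha: "\<forall>i\<in>N. a i = \<mu> * cvec i + \<mu> * \<epsilon> i" and He: "(\<Sum>i\<in>N. \<epsilon> i) = 0"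
      and Hl: "l1norm m \<epsilon> < \<delta>" and i: "i \<in> N" for a \<epsilon> i
  proof -
    have m1: "1 \<le> m" using i by (cases m) (auto simp: N_def)
    have "(2::nat)^1 \<le> 2^m" by (rule power_increasing[OF m1]) simp
    hence oneN: "1 \<in> N" by (simp add: N_def)
    have finN: "finite N" by (simp add: N_def)
    define L where "L = l1norm m \<epsilon>"
    have L0: "L \<ge> 0" by (simp add: L_def l1norm_def sum_nonneg)
    define u where "u j = \<mu> * matvec m (Psi m) \<epsilon> j" for j
    have mvN: "matvec m M v j = (\<Sum>l\<in>N. M j l * v l)" for M v j by (simp add: matvec_def N_def)
    have hPa: "matvec m (Psi m) a j = \<mu> * (K + (if j = 1 then K else 0)) / 2 + u j" if j: "j \<in> N" for j
    proof -
      have "matvec m (Psi m) a j = (\<Sum>l\<in>N. \<mu> * (Psi m j l * Psi m l 1) / 2 + \<mu> * (Psi m j l * \<epsilon> l))"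
        unfolding mvN
      proof (rule sum.cong[OF refl])
        fix l assume l: "l \<in> N"
        hence "l < 2^m" by (auto simp: N_def)
        hence "Psi m l 1 = 2 * cvec l" using psi_1[OF m1] by simp
        thus "Psi m j l * a l = \<mu> * (Psi m j l * Psi m l 1) / 2 + \<mu> * (Psi m j l * \<epsilon> l)"
          using Ha l by (simp add: algebra_simps)
      qed
      also have "\<dots> = \<mu> * (\<Sum>l\<in>N. Psi m j l * Psi m l 1) / 2 + u j"
        by (simp add: sum.distrib sum_distrib_left sum_divide_distrib u_def mvN)
      also have "(\<Sum>l\<in>N. Psi m j l * Psi m l 1) = K + (if j = 1 then K else 0)"
        using psi_sq[of j m 1] j oneN by (simp add: N_def K_def)
      finally show ?thesis .
    qed
    define wt where "wt j = E2 + (if j = 1 then E1 - E2 else 0)" for j :: nat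
    have hexp: "exp (- matvec m (Psi m) a j) = wt j * exp (- u j)" if j: "j \<in> N" for j
    proof (cases "j = 1")
      case True
      have "- matvec m (Psi m) a j = (- real (2^m) * \<mu>) + - u j" using hPa[OF j] True by (simp add: K_def)
      thus ?thesis using True unfolding wt_def E1_def by (simp only: exp_add) simp
    next
      case False
      have "- matvec m (Psi m) a j = (- real (2^m) * \<mu> / 2) + - u j" using hPa[OF j] False by (simp add: K_def)
      thus ?thesis using False unfolding wt_def E2_def by (simp only: exp_add) simp
    qed
    have hu: "\<bar>u j\<bar> \<le> 2 * \<bar>\<mu>\<bar> * L" for j
    proof -
      have "\<bar>matvec m (Psi m) \<epsilon> j\<bar> \<le> (\<Sum>l\<in>N. \<bar>Psi m j l * \<epsilon> l\<bar>)" unfolding mvN by (rule sum_abs)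
      also have "\<dots> \<le> (\<Sum>l\<in>N. 2 * \<bar>\<epsilon> l\<bar>)"
        by (intro sum_mono) (simp add: abs_mult mult_right_mono psi_abs)
      also have "\<dots> = 2 * L" by (simp add: L_def l1norm_def N_def sum_distrib_left)
      finally have "\<bar>matvec m (Psi m) \<epsilon> j\<bar> \<le> 2 * L" .
      hence "\<bar>\<mu>\<bar> * \<bar>matvec m (Psi m) \<epsilon> j\<bar> \<le> \<bar>\<mu>\<bar> * (2 * L)" by (rule mult_left_mono) simp
      thus ?thesis by (simp add: u_def abs_mult)
    qed
    have hu1: "\<bar>u j\<bar> \<le> 1" for j
    proof -
      have "2 * \<bar>\<mu>\<bar> * L \<le> 2 * \<bar>\<mu>\<bar> * \<delta>" using Hl L_def by (simp add: mult_left_mono)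
      also have "\<dots> \<le> 1" by (simp add: \<delta>_def field_simps)
      finally show ?thesis using hu[of j] by linarith
    qed
    define r where "r j = exp (- u j) - 1 + u j" for j
    have hr: "\<bar>r j\<bar> \<le> (2 * \<bar>\<mu>\<bar> * L)\<^sup>2" for j
    proof -
      have "\<bar>r j\<bar> \<le> (- u j)\<^sup>2" using exp_quad[of "- u j"] hu1[of j] by (simp add: r_def)
      also have "\<dots> = \<bar>u j\<bar>\<^sup>2" by simp
      also have "\<dots> \<le> (2 * \<bar>\<mu>\<bar> * L)\<^sup>2" using hu[of j] by (intro power_mono) auto
      finally show ?thesis .
    qed
    have hw: "0 \<le> wt j \<and> wt j \<le> W" for j
    proof -
      have e1: "E1 = exp (K * (-\<mu>))" by (simp add: E1_def K_def)
      have e2: "E2 = exp (K * (-\<mu>) / 2)" by (simp add: E2_def K_def)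
      have a1: "K * (-\<mu>) \<le> K * \<bar>\<mu>\<bar>" using Kpos by (intro mult_left_mono) auto
      have "0 \<le> K * \<bar>\<mu>\<bar>" using Kpos by simp
      hence a2: "K * (-\<mu>) / 2 \<le> K * \<bar>\<mu>\<bar>" using a1 by linarith
      show ?thesis using a1 a2 by (auto simp: wt_def e1 e2 W_def)
    qed
    define P where "P j = Psi m i j" for j
    have LHS: "matvec m (Psi m) (\<lambda>j. exp (- matvec m (Psi m) a j)) i
       = (\<Sum>j\<in>N. P j * wt j * 1) - (\<Sum>j\<in>N. P j * wt j * u j) + (\<Sum>j\<in>N. P j * wt j * r j)"
    proof -
      have "matvec m (Psi m) (\<lambda>j. exp (- matvec m (Psi m) a j)) i = (\<Sum>j\<in>N. P j * wt j * 1 - P j * wt j * u j + P j * wt j * r j)"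
      proof -
        have "matvec m (Psi m) (\<lambda>j. exp (- matvec m (Psi m) a j)) i = (\<Sum>j\<in>N. Psi m i j * exp (- matvec m (Psi m) a j))" by (rule mvN)
        also have "\<dots> = (\<Sum>j\<in>N. P j * wt j * 1 - P j * wt j * u j + P j * wt j * r j)"
          by (intro sum.cong refl) (simp add: hexp P_def r_def algebra_simps)
        finally show ?thesis .
      qed
      thus ?thesis by (simp add: sum.distrib sum_subtractf)
    qed
    have S1: "(\<Sum>j\<in>N. P j * wt j * 1) = E2 * K + (E1 - E2) * P 1"
      using weighted[OF oneN finN, of P E2 "E1 - E2" "\<lambda>_. 1"] psi_row[of i m] i
      by (simp add: wt_def P_def N_def K_def)
    have PPe: "(\<Sum>j\<in>N. P j * u j) = \<mu> * (K * \<epsilon> i)"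
      using psi_psi_vec[of i m \<epsilon>] i He
      by (simp add: u_def mvN P_def N_def K_def sum_distrib_left[symmetric] mult.left_commute)
    have S2: "(\<Sum>j\<in>N. P j * wt j * u j) = E2 * (\<mu> * (K * \<epsilon> i)) + (E1 - E2) * P 1 * u 1"
      using weighted[OF oneN finN, of P E2 "E1 - E2" u] PPe
      by (simp add: wt_def)
    have P1: "P 1 = 2 * cvec i" using psi_1[OF m1, of i] i
      by (auto simp: P_def N_def)
    have S3: "\<bar>\<Sum>j\<in>N. P j * wt j * r j\<bar> \<le> C * L\<^sup>2"
    proof -
      have "\<bar>\<Sum>j\<in>N. P j * wt j * r j\<bar> \<le> (\<Sum>j\<in>N. \<bar>P j * wt j * r j\<bar>)" by (rule sum_abs)
      also have "\<dots> \<le> (\<Sum>j\<in>N. 2 * W * (2 * \<bar>\<mu>\<bar> * L)\<^sup>2)"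
      proof (rule sum_mono)
        fix j
        have "\<bar>P j * wt j * r j\<bar> = \<bar>P j\<bar> * \<bar>wt j\<bar> * \<bar>r j\<bar>" by (simp add: abs_mult)
        also have "\<dots> \<le> 2 * W * (2 * \<bar>\<mu>\<bar> * L)\<^sup>2"
          using hw[of j] hr[of j] psi_abs[of m i j]
          by (intro mult_mono) (auto simp: P_def)
        finally show "\<bar>P j * wt j * r j\<bar> \<le> 2 * W * (2 * \<bar>\<mu>\<bar> * L)\<^sup>2" .
      qed
      also have "\<dots> = real (card N) * (8 * W * \<mu>\<^sup>2 * L\<^sup>2)" by (simp add: power2_eq_square algebra_simps)
      also have "\<dots> \<le> K * (8 * W * \<mu>\<^sup>2 * L\<^sup>2)"
        by (intro mult_right_mono) (auto simp: N_def K_def W_def)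
      finally show ?thesis by (simp add: C_def algebra_simps)
    qed
    have "matvec m (Psi m) (\<lambda>j. exp (- matvec m (Psi m) a j)) i
           - ( K * E2 - K * E2 * \<mu> * \<epsilon> i + 2 * (E1 - E2) * (1 - \<mu> * matvec m (Psi m) \<epsilon> 1) * cvec i)
       = (\<Sum>j\<in>N. P j * wt j * r j)"
      unfolding LHS S1 S2 P1 by (simp add: u_def algebra_simps)
    thus ?thesis using S3 by (simp add: L_def)
  qed
  show ?thesis
    apply (rule exI[of _ C], rule exI[of _ \<delta>])
    using main dpos unfolding N_def K_def E1_def E2_def by blast
qed

end
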